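(* Let $K$ be a field and $\nu$ a valuation on $K[x]$. Let $\mathbf{Q}\subseteq K[x]$ be a complete set for $\nu$. Then for every polynomial $p\in K[x]$ there exist $a_1,\ldots,a_r\in K$ and $\lambda_1,\ldots,\lambda_r\in\mathbb{N}^{\mathbf{Q}}$ such that \[ p=\sum_{i=1}^r a_i\mathbf{Q}^{\lambda_i}\quad\text{and}\quad \nu\left(a_i\mathbf{Q}^{\lambda_i}\right)\geq \nu(p)\ \text{ for every } i,\ 1\leq i\leq r, \] and every $Q\in\mathbf{Q}$ appearing in this decomposition (i.e. with $\lambda_i(Q)\neq 0$ for some $i$) satisfies $\deg(Q)\leq\deg(p)$. In particular, for every $\beta\in\nu(K[x])$, the additive group $P_\beta=\{y\in K[x]\mid \nu(y)\geq\beta\}$ is generated by the elements $a\mathbf{Q}^\lambda$ lying in $P_\beta$, where $a\in K$ and $\lambda\in\mathbb{N}^{\mathbf{Q}}$.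
   Context: A valuation on a commutative ring $R$ is a map $\nu:R\to\Gamma\cup\{\infty\}$, $\Gamma$ an ordered abelian group, with $\nu(ab)=\nu(a)+\nu(b)$, $\nu(a+b)\geq\min\{\nu(a),\nu(b)\}$, $\nu(1)=0$, $\nu(0)=\infty$ (nonzero elements may have value $\infty$). For a nonconstant monic $q\in K[x]$ and $f\in K[x]$, the $q$-expansion of $f$ is the unique expression $f=f_0+f_1q+\cdots+f_nq^n$ with each $f_i=0$ or $\deg(f_i)<\deg(q)$; the $q$-truncation of $\nu$ is $\nu_q(f):=\min_{0\leq i\leq n}\nu(f_iq^i)$. A set $\mathbf{Q}$ of nonconstant monic polynomials in $K[x]$ is a complete set for $\nu$ if for every nonconstant $p\in K[x]$ there exists $q\in\mathbf{Q}$ with $\deg(q)\leq\deg(p)$ and $\nu(p)=\nu_q(p)$. $\mathbb{N}^{\mathbf{Q}}$ denotes the set of maps $\lambda:\mathbf{Q}\to\mathbb{N}$ with $\lambda(q)=0$ for all but finitely many $q$, and $\mathbf{Q}^\lambda:=\prod_{q\in\mathbf{Q}}q^{\lambda(q)}$. *)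

theory Defs
  imports "HOL-Computational_Algebra.Polynomial"
begin

datatype 'g vext = Fin 'g | Infty

instantiation vext :: (linorder) linorder
begin
fun less_eq_vext :: "'a vext \<Rightarrow> 'a vext \<Rightarrow> bool" where
  "less_eq_vext _ Infty = True"
| "less_eq_vext Infty (Fin _) = False"
| "less_eq_vext (Fin a) (Fin b) = (a \<le> b)"
definition less_vext :: "'a vext \<Rightarrow> 'a vext \<Rightarrow> bool" where
  "less_vext a b = (a \<le> b \<and> \<not> b \<le> a)"
instance
proof
  fix x y z :: "'a vext"
  show "(x < y) = (x \<le> y \<and> \<not> y \<le> x)" by (simp add: less_vext_def)
  show "x \<le> x" by (cases x) auto
  show "x \<le> y \<Longrightarrow> y \<le> z \<Longrightarrow> x \<le> z"
    by (cases x; cases y; cases z) auto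
  show "x \<le> y \<Longrightarrow> y \<le> x \<Longrightarrow> x = y"
    by (cases x; cases y) auto
  show "x \<le> y \<or> y \<le> x" by (cases x; cases y) auto
qed
end

fun vadd :: "'g::ab_group_add vext \<Rightarrow> 'g vext \<Rightarrow> 'g vext" where
  "vadd (Fin a) (Fin b) = Fin (a + b)"
| "vadd _ _ = Infty"

text \<open>Valuation on the commutative ring K[x] with values in an ordered abelian group
  together with infinity (nonzero elements may have value infinity).\<close>
definition valuation :: "('a::field poly \<Rightarrow> 'g::linordered_ab_group_add vext) \<Rightarrow> bool" where
  "valuation \<nu> \<longleftrightarrow>
     (\<forall>a b. \<nu> (a * b) = vadd (\<nu> a) (\<nu> b)) \<and>
     (\<forall>a b. \<nu> (a + b) \<ge> min (\<nu> a) (\<nu> b)) \<and>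
     \<nu> 1 = Fin 0 \<and> \<nu> 0 = Infty"

definition qexp_coeffs :: "'a::field poly \<Rightarrow> 'a poly \<Rightarrow> nat \<Rightarrow> 'a poly" where
  "qexp_coeffs q f = (THE c. f = (\<Sum>i\<le>degree f. c i * q ^ i) \<and>
       (\<forall>i. c i = 0 \<or> degree (c i) < degree q) \<and> (\<forall>i>degree f. c i = 0))"

definition qtrunc :: "('a::field poly \<Rightarrow> 'g::linorder vext) \<Rightarrow> 'a poly \<Rightarrow> 'a poly \<Rightarrow> 'g vext" where
  "qtrunc \<nu> q f = Min ((\<lambda>i. \<nu> (qexp_coeffs q f i * q ^ i)) ` {..degree f})"

definition complete_set :: "('a::field poly \<Rightarrow> 'g::linorder vext) \<Rightarrow> 'a poly set \<Rightarrow> bool" where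
  "complete_set \<nu> Q \<longleftrightarrow>
     (\<forall>q\<in>Q. lead_coeff q = 1 \<and> degree q > 0) \<and>
     (\<forall>p. degree p > 0 \<longrightarrow> (\<exists>q\<in>Q. degree q \<le> degree p \<and> \<nu> p = qtrunc \<nu> q p))"

definition NQ :: "'a poly set \<Rightarrow> ('a poly \<Rightarrow> nat) set" where
  "NQ Q = {lam. finite {q. lam q \<noteq> 0} \<and> {q. lam q \<noteq> 0} \<subseteq> Q}"

definition Qpow :: "('a::comm_semiring_1 poly \<Rightarrow> nat) \<Rightarrow> 'a poly" where
  "Qpow lam = (\<Prod>q\<in>{q. lam q \<noteq> 0}. q ^ lam q)"

definition add_subgroup_gen :: "'b::ab_group_add set \<Rightarrow> 'b set" where
  "add_subgroup_gen S = \<Inter>{H. 0 \<in> H \<and> (\<forall>x\<in>H. \<forall>y\<in>H. x - y \<in> H) \<and> S \<subseteq> H}"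

end

theory Submission
  imports Defs
begin

definition red :: "'a::field poly \<Rightarrow> (nat \<Rightarrow> 'a poly) \<Rightarrow> bool" where
  "red q c \<longleftrightarrow> (\<forall>i. c i = 0 \<or> degree (c i) < degree q)"

lemma sum_extend:
  fixes c :: "nat \<Rightarrow> 'a::field poly"
  assumes "\<forall>i>m. c i = 0" "m \<le> n"
  shows "(\<Sum>i\<le>n. c i * q ^ i) = (\<Sum>i\<le>m. c i * q ^ i)"
  by (rule sum.mono_neutral_right) (use assms in auto)

lemma split_eq:
  fixes q :: "'a::field poly"
  assumes "degree q > 0" "A = 0 \<or> degree A < degree q" "A' = 0 \<or> degree A' < degree q"
    and "A + q * B = A' + q * B'"
  shows "A = A' \<and> B = B'"
proof (cases "B = B'")
  case True with assms show ?thesis by simp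
next
  case False
  have q0: "q \<noteq> 0" using assms(1) by auto
  have "A - A' = q * (B' - B)" using assms(4) by (simp add: algebra_simps)
  moreover have "degree (q * (B' - B)) \<ge> degree q" using False q0 by (simp add: degree_mult_eq)
  moreover have "degree (A - A') < degree q"
    using assms(2,3) degree_diff_le_max[of A A'] assms(1)
    by (metis degree_0 diff_zero le_less_trans max.bounded_iff max_def degree_minus minus_diff_eq diff_0)
  ultimately show ?thesis by simp
qed

lemma expansion_exists:
  fixes q :: "'a::field poly"
  assumes q: "degree q > 0"
  shows "\<exists>c. f = (\<Sum>i\<le>degree f. c i * q ^ i) \<and> red q c \<and> (\<forall>i>degree f. c i = 0)"
proof (induction "degree f" arbitrary: f rule: less_induct)
  case less
  show ?case
  proof (cases "degree f = 0")
    case True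
    let ?c = "\<lambda>i. if i = 0 then f else 0"
    have "degree f < degree q" using True q by simp
    then show ?thesis using True by (intro exI[of _ ?c]) (auto simp: red_def)
  next
    case False
    then obtain m where m: "degree f = Suc m" by (cases "degree f") auto
    define g where "g = f div q"
    define r where "r = f mod q"
    have dg: "degree g < degree f" unfolding g_def using False q by (intro degree_div_less) auto
    from less[OF dg] obtain c' where c': "g = (\<Sum>i\<le>degree g. c' i * q ^ i)" "red q c'"
      "\<forall>i>degree g. c' i = 0" by blast
    define c where "c i = (if i = 0 then r else c' (i - 1))" for i
    have fr: "f = r + q * g" unfolding r_def g_def by (metis add.commute div_mult_mod_eq mult.commute)
    have "(\<Sum>i\<le>degree f. c i * q ^ i) = c 0 + (\<Sum>i\<le>m. c (Suc i) * q ^ Suc i)"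
      unfolding m by (subst sum.atMost_Suc_shift) simp
    also have "(\<Sum>i\<le>m. c (Suc i) * q ^ Suc i) = q * (\<Sum>i\<le>m. c' i * q ^ i)"
      by (simp add: c_def sum_distrib_left algebra_simps)
    also have "(\<Sum>i\<le>m. c' i * q ^ i) = g"
      using c' dg m by (subst sum_extend[of "degree g"]) auto
    finally have "(\<Sum>i\<le>degree f. c i * q ^ i) = f" using fr by (simp add: c_def)
    moreover have "red q c" using c'(2) q unfolding red_def c_def r_def
      by (metis degree_mod_less q degree_0 gr_implies_not0)
    moreover have "\<forall>i>degree f. c i = 0" using c'(3) dg by (auto simp: c_def)
    ultimately show ?thesis by metis
  qed
qed

lemma expansion_unique:
  fixes q :: "'a::field poly"
  assumes q: "degree q > 0"
  shows "red q c \<Longrightarrow> red q d \<Longrightarrow> (\<Sum>i\<le>n. c i * q ^ i) = (\<Sum>i\<le>n. d i * q ^ i)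
     \<Longrightarrow> i \<le> n \<Longrightarrow> c i = d i"
proof (induction n arbitrary: c d i)
  case 0 then show ?case by simp
next
  case (Suc n)
  have "c 0 + q * (\<Sum>i\<le>n. c (Suc i) * q ^ i) = d 0 + q * (\<Sum>i\<le>n. d (Suc i) * q ^ i)"
    using Suc.prems(3) by (simp add: sum.atMost_Suc_shift del: sum.atMost_Suc sum_distrib_left)
      (simp add: sum_distrib_left algebra_simps)
  from split_eq[OF q _ _ this] Suc.prems(1,2) have
    e: "c 0 = d 0" "(\<Sum>i\<le>n. c (Suc i) * q ^ i) = (\<Sum>i\<le>n. d (Suc i) * q ^ i)"
    by (auto simp: red_def)
  show ?case
  proof (cases i)
    case 0 then show ?thesis using e by simp
  next
    case (Suc j)
    have "red q (\<lambda>i. c (Suc i))" "red q (\<lambda>i. d (Suc i))" using Suc.prems(1,2) by (auto simp: red_def)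
    from Suc.IH[OF this e(2)] Suc.prems(4) Suc show ?thesis by simp
  qed
qed

lemma qexp_props:
  fixes q :: "'a::field poly"
  assumes q: "degree q > 0"
  shows "f = (\<Sum>i\<le>degree f. qexp_coeffs q f i * q ^ i) \<and> red q (qexp_coeffs q f)
         \<and> (\<forall>i>degree f. qexp_coeffs q f i = 0)"
proof -
  let ?P = "\<lambda>c. f = (\<Sum>i\<le>degree f. c i * q ^ i) \<and>
       (\<forall>i. c i = 0 \<or> degree (c i) < degree q) \<and> (\<forall>i>degree f. c i = 0)"
  have "\<exists>!c. ?P c"
  proof -
    obtain c where c: "?P c" using expansion_exists[OF q, of f] by (auto simp: red_def)
    moreover have "d = c" if "?P d" for d
    proof
      fix i show "d i = c i"
      proof (cases "i \<le> degree f")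
        case True
        show ?thesis
          by (rule expansion_unique[OF q _ _ _ True]) (use c that in \<open>auto simp: red_def\<close>)
      next
        case False then show ?thesis using c that by auto
      qed
    qed
    ultimately show ?thesis by blast
  qed
  from theI'[OF this] show ?thesis unfolding qexp_coeffs_def red_def by blast
qed

lemma vadd_mono: "(x::'g::linordered_ab_group_add vext) \<le> y \<Longrightarrow> vadd x z \<le> vadd y z"
  by (cases x; cases y; cases z) auto

lemma val_uminus:
  fixes \<nu> :: "'a::field poly \<Rightarrow> 'g::linordered_ab_group_add vext"
  assumes v: "valuation \<nu>"
  shows "\<nu> (- y) = \<nu> y"
proof -
  have "vadd (\<nu> (-1)) (\<nu> (-1)) = \<nu> ((-1) * (-1))" using v unfolding valuation_def by metis
  also have "\<dots> = Fin 0" using v by (simp add: valuation_def)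
  finally have m: "\<nu> (-1) = Fin 0" by (cases "\<nu> (-1)") auto
  have "\<nu> (- y) = \<nu> ((-1) * y)" by simp
  also have "\<dots> = vadd (Fin 0) (\<nu> y)" using v m unfolding valuation_def by metis
  also have "\<dots> = \<nu> y" by (cases "\<nu> y") auto
  finally show ?thesis .
qed

lemma Qpow_alt:
  assumes "finite S" "{q. lam q \<noteq> 0} \<subseteq> S"
  shows "Qpow lam = (\<Prod>q\<in>S. q ^ lam q)"
  unfolding Qpow_def by (rule prod.mono_neutral_left) (use assms in auto)

lemma Qpow_upd:
  assumes "finite {x. lam x \<noteq> 0}"
  shows "Qpow (lam(q := lam q + i)) = Qpow lam * q ^ i"
proof -
  define S where "S = insert q {x. lam x \<noteq> 0}"
  have fS: "finite S" using assms by (simp add: S_def)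
  have "Qpow (lam(q := lam q + i)) = (\<Prod>x\<in>S. x ^ (lam(q := lam q + i)) x)"
    by (rule Qpow_alt[OF fS]) (auto simp: S_def)
  also have "\<dots> = (\<Prod>x\<in>S - {q}. x ^ lam x) * q ^ (lam q + i)"
    using fS by (subst prod.remove[of S q]) (auto simp: S_def mult.commute intro!: prod.cong)
  finally have 1: "Qpow (lam(q := lam q + i)) = (\<Prod>x\<in>S - {q}. x ^ lam x) * q ^ (lam q + i)" .
  have "Qpow lam = (\<Prod>x\<in>S. x ^ lam x)" by (rule Qpow_alt[OF fS]) (auto simp: S_def)
  also have "\<dots> = (\<Prod>x\<in>S - {q}. x ^ lam x) * q ^ lam q"
    using fS by (subst prod.remove[of S q]) (auto simp: S_def mult.commute)
  finally have 2: "Qpow lam = (\<Prod>x\<in>S - {q}. x ^ lam x) * q ^ lam q" .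
  from 1 2 show ?thesis by (simp add: power_add mult.assoc)
qed

definition tm :: "'a \<times> ('a::field poly \<Rightarrow> nat) \<Rightarrow> 'a poly" where
  "tm x = smult (fst x) (Qpow (snd x))"

definition good :: "('a::field poly \<Rightarrow> 'g::linordered_ab_group_add vext) \<Rightarrow> 'a poly set
   \<Rightarrow> 'g vext \<Rightarrow> nat \<Rightarrow> 'a poly \<Rightarrow> bool" where
  "good \<nu> Q \<beta> D p \<longleftrightarrow> (\<exists>xs. p = sum_list (map tm xs) \<and>
     (\<forall>x\<in>set xs. snd x \<in> NQ Q \<and> \<nu> (tm x) \<ge> \<beta> \<and> (\<forall>q. snd x q \<noteq> 0 \<longrightarrow> degree q \<le> D)))"

lemma good_zero: "good \<nu> Q \<beta> D 0"
  unfolding good_def by (rule exI[of _ "[]"]) simp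

lemma good_add: "good \<nu> Q \<beta> D p \<Longrightarrow> good \<nu> Q \<beta> D p' \<Longrightarrow> good \<nu> Q \<beta> D (p + p')"
  unfolding good_def
  by (elim exE, rename_tac xs ys, rule_tac x="xs @ ys" in exI) auto

lemma good_sum: fixes n :: nat shows "(\<And>i. i \<le> n \<Longrightarrow> good \<nu> Q \<beta> D (f i)) \<Longrightarrow> good \<nu> Q \<beta> D (\<Sum>i\<le>n. f i)"
  by (induction n) (auto intro: good_add)

lemma good_mono: "good \<nu> Q \<beta> D p \<Longrightarrow> \<beta>' \<le> \<beta> \<Longrightarrow> D \<le> D' \<Longrightarrow> good \<nu> Q \<beta>' D' p"
  unfolding good_def by (elim exE conjE, rename_tac xs, rule_tac x=xs in exI) (meson order_trans)

lemma good_mult: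
  fixes \<nu> :: "'a::field poly \<Rightarrow> 'g::linordered_ab_group_add vext"
  assumes v: "valuation \<nu>" and g: "good \<nu> Q \<beta> D f" and qQ: "q \<in> Q" and dq: "degree q \<le> D"
  shows "good \<nu> Q (vadd \<beta> (\<nu> (q ^ i))) D (f * q ^ i)"
proof -
  obtain xs where xs: "f = sum_list (map tm xs)"
    "\<forall>x\<in>set xs. snd x \<in> NQ Q \<and> \<nu> (tm x) \<ge> \<beta> \<and> (\<forall>q. snd x q \<noteq> 0 \<longrightarrow> degree q \<le> D)"
    using g unfolding good_def by blast
  define up where "up x = (fst x, (snd x)(q := snd x q + i))" for x :: "'a \<times> ('a poly \<Rightarrow> nat)"
  have tmup: "tm (up x) = tm x * q ^ i" if "x \<in> set xs" for x
  proof -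
    have "finite {y. snd x y \<noteq> 0}" using xs(2) that by (auto simp: NQ_def)
    then show ?thesis by (simp add: tm_def up_def Qpow_upd)
  qed
  have "f * q ^ i = sum_list (map tm (map up xs))"
    unfolding xs(1) sum_list_mult_const[symmetric] map_map o_def
    by (rule arg_cong[where f=sum_list]) (auto simp: tmup)
  moreover have "\<forall>x\<in>set (map up xs). snd x \<in> NQ Q \<and> \<nu> (tm x) \<ge> vadd \<beta> (\<nu> (q ^ i))
      \<and> (\<forall>q. snd x q \<noteq> 0 \<longrightarrow> degree q \<le> D)"
  proof
    fix y assume "y \<in> set (map up xs)"
    then obtain x where x: "x \<in> set xs" "y = up x" by auto
    have sub: "{z. snd y z \<noteq> 0} \<subseteq> insert q {z. snd x z \<noteq> 0}" using x by (auto simp: up_def)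
    have "snd y \<in> NQ Q" using xs(2) x(1) qQ finite_subset[OF sub] sub by (auto simp: NQ_def)
    moreover have "\<nu> (tm y) = vadd (\<nu> (tm x)) (\<nu> (q ^ i))"
      using v tmup x by (simp add: valuation_def)
    moreover have "vadd \<beta> (\<nu> (q ^ i)) \<le> vadd (\<nu> (tm x)) (\<nu> (q ^ i))"
      using xs(2) x(1) by (intro vadd_mono) auto
    moreover have "\<forall>z. snd y z \<noteq> 0 \<longrightarrow> degree z \<le> D" using sub xs(2) x(1) dq by blast
    ultimately show "snd y \<in> NQ Q \<and> \<nu> (tm y) \<ge> vadd \<beta> (\<nu> (q ^ i))
      \<and> (\<forall>q. snd y q \<noteq> 0 \<longrightarrow> degree q \<le> D)" by simp
  qed
  ultimately show ?thesis unfolding good_def by blast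
qed

lemma all_good:
  fixes \<nu> :: "'a::field poly \<Rightarrow> 'g::linordered_ab_group_add vext"
  assumes v: "valuation \<nu>" and cs: "complete_set \<nu> Q"
  shows "good \<nu> Q (\<nu> p) (degree p) p"
proof (induction "degree p" arbitrary: p rule: less_induct)
  case less
  show ?case
  proof (cases "degree p = 0")
    case True
    then obtain c where pc: "p = [:c:]" by (metis degree_eq_zeroE)
    let ?x = "(c, \<lambda>_::'a poly. 0::nat)"
    have "tm ?x = p" by (simp add: tm_def Qpow_def pc)
    then show ?thesis unfolding good_def
      by (intro exI[of _ "[?x]"]) (auto simp: NQ_def)
  next
    case False
    then obtain q where qQ: "q \<in> Q" and dq: "degree q \<le> degree p" and eq: "\<nu> p = qtrunc \<nu> q p"
      using cs unfolding complete_set_def by blast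
    have q0: "degree q > 0" using cs qQ unfolding complete_set_def by blast
    let ?c = "qexp_coeffs q p"
    note props = qexp_props[OF q0, of p]
    have "good \<nu> Q (\<nu> p) (degree p) (?c i * q ^ i)" if i: "i \<le> degree p" for i
    proof (cases "?c i = 0")
      case True then show ?thesis by (simp add: good_zero)
    next
      case False
      then have dc: "degree (?c i) < degree p" using props dq unfolding red_def by (meson less_le_trans)
      have g1: "good \<nu> Q (\<nu> (?c i)) (degree p) (?c i)"
        by (rule good_mono[OF less[OF dc]]) (use dc in auto)
      have g2: "good \<nu> Q (\<nu> (?c i * q ^ i)) (degree p) (?c i * q ^ i)"
        using good_mult[OF v g1 qQ dq, of i] v by (simp add: valuation_def)
      have "\<nu> p \<le> \<nu> (?c i * q ^ i)" unfolding eq qtrunc_def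
        by (rule Min_le) (use i in auto)
      then show ?thesis using g2 by (rule_tac good_mono) auto
    qed
    then have "good \<nu> Q (\<nu> p) (degree p) (\<Sum>i\<le>degree p. ?c i * q ^ i)" by (rule good_sum)
    then show ?thesis using props by simp
  qed
qed

theorem mainTheorem1:
  fixes \<nu> :: "'a::field poly \<Rightarrow> 'g::linordered_ab_group_add vext"
    and Q :: "'a poly set"
  assumes "valuation \<nu>" and "complete_set \<nu> Q"
  shows "(\<forall>p. \<exists>(r::nat) (a::nat \<Rightarrow> 'a) lam.
            (\<forall>i<r. lam i \<in> NQ Q) \<and>
            p = (\<Sum>i<r. smult (a i) (Qpow (lam i))) \<and>
            (\<forall>i<r. \<nu> (smult (a i) (Qpow (lam i))) \<ge> \<nu> p) \<and>
            (\<forall>i<r. \<forall>q. lam i q \<noteq> 0 \<longrightarrow> degree q \<le> degree p))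
       \<and> (\<forall>\<beta>\<in>range \<nu>.
            {y. \<nu> y \<ge> \<beta>} =
            add_subgroup_gen {smult a (Qpow lam) | a lam.
                               lam \<in> NQ Q \<and> \<nu> (smult a (Qpow lam)) \<ge> \<beta>})"
proof (intro conjI allI ballI)
  fix p
  obtain xs where xs: "p = sum_list (map tm xs)"
    "\<forall>x\<in>set xs. snd x \<in> NQ Q \<and> \<nu> (tm x) \<ge> \<nu> p \<and> (\<forall>q. snd x q \<noteq> 0 \<longrightarrow> degree q \<le> degree p)"
    using all_good[OF assms, of p] unfolding good_def by blast
  have s: "p = (\<Sum>i<length xs. smult (fst (xs ! i)) (Qpow (snd (xs ! i))))"
    unfolding xs(1) sum_list_sum_nth by (simp add: tm_def atLeast0LessThan)
  show "\<exists>(r::nat) (a::nat \<Rightarrow> 'a) lam.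
            (\<forall>i<r. lam i \<in> NQ Q) \<and>
            p = (\<Sum>i<r. smult (a i) (Qpow (lam i))) \<and>
            (\<forall>i<r. \<nu> (smult (a i) (Qpow (lam i))) \<ge> \<nu> p) \<and>
            (\<forall>i<r. \<forall>q. lam i q \<noteq> 0 \<longrightarrow> degree q \<le> degree p)"
    apply (rule exI[of _ "length xs"], rule exI[of _ "\<lambda>i. fst (xs ! i)"], rule exI[of _ "\<lambda>i. snd (xs ! i)"])
  proof (intro conjI allI impI)
    fix i assume i: "i < length xs"
    then have mem: "xs ! i \<in> set xs" by (rule nth_mem)
    have h: "snd (xs ! i) \<in> NQ Q \<and> \<nu> (tm (xs ! i)) \<ge> \<nu> p \<and>
      (\<forall>q. snd (xs ! i) q \<noteq> 0 \<longrightarrow> degree q \<le> degree p)"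
      using xs(2) mem by (rule bspec)
    show "snd (xs ! i) \<in> NQ Q" using h by (rule conjunct1)
    show "\<nu> (smult (fst (xs ! i)) (Qpow (snd (xs ! i)))) \<ge> \<nu> p"
      using h unfolding tm_def by (elim conjE)
    fix q assume "snd (xs ! i) q \<noteq> 0"
    then show "degree q \<le> degree p" using h by (elim conjE allE) (erule mp)
  qed (rule s)
next
  fix \<beta> assume "\<beta> \<in> range \<nu>"
  let ?S = "{smult a (Qpow lam) | a lam. lam \<in> NQ Q \<and> \<nu> (smult a (Qpow lam)) \<ge> \<beta>}"
  show "{y. \<nu> y \<ge> \<beta>} = add_subgroup_gen ?S"
  proof
    show "{y. \<nu> y \<ge> \<beta>} \<subseteq> add_subgroup_gen ?S"
    proof
      fix y assume y: "y \<in> {y. \<nu> y \<ge> \<beta>}"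
      obtain xs where xs: "y = sum_list (map tm xs)"
        "\<forall>x\<in>set xs. snd x \<in> NQ Q \<and> \<nu> (tm x) \<ge> \<nu> y \<and> (\<forall>q. snd x q \<noteq> 0 \<longrightarrow> degree q \<le> degree y)"
        using all_good[OF assms, of y] unfolding good_def by blast
      show "y \<in> add_subgroup_gen ?S" unfolding add_subgroup_gen_def
      proof
        fix H assume H: "H \<in> {H. 0 \<in> H \<and> (\<forall>x\<in>H. \<forall>y\<in>H. x - y \<in> H) \<and> ?S \<subseteq> H}"
        have addH: "a + b \<in> H" if "a \<in> H" "b \<in> H" for a b
        proof -
          have "0 - b \<in> H" using H that by blast
          then have "a - (0 - b) \<in> H" using H that by blast
          then show ?thesis by simp
        qed
        have "\<forall>x\<in>set xs. tm x \<in> H"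
        proof
          fix x assume "x \<in> set xs"
          then have "tm x \<in> ?S" using xs(2) y unfolding tm_def by (auto intro: order_trans)
          then show "tm x \<in> H" using H by blast
        qed
        then have "sum_list (map tm xs) \<in> H"
          by (induction xs) (use H addH in auto)
        then show "y \<in> H" using xs(1) by simp
      qed
    qed
  next
    have "{y. \<nu> y \<ge> \<beta>} \<in> {H. 0 \<in> H \<and> (\<forall>x\<in>H. \<forall>y\<in>H. x - y \<in> H) \<and> ?S \<subseteq> H}"
    proof -
      have "0 \<in> {y. \<nu> y \<ge> \<beta>}" using assms(1) by (simp add: valuation_def)
      moreover have "?S \<subseteq> {y. \<nu> y \<ge> \<beta>}" by auto
      moreover have "\<forall>x\<in>{y. \<nu> y \<ge> \<beta>}. \<forall>y\<in>{y. \<nu> y \<ge> \<beta>}. x - y \<in> {y. \<nu> y \<ge> \<beta>}"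
      proof (intro ballI)
      fix x y assume xy: "x \<in> {y. \<nu> y \<ge> \<beta>}" "y \<in> {y. \<nu> y \<ge> \<beta>}"
      have m: "min (\<nu> x) (\<nu> (- y)) \<ge> \<beta>" 
        using xy val_uminus[OF assms(1), of y] by (intro min.boundedI) (simp_all only: mem_Collect_eq)
      have "\<nu> (x - y) \<ge> min (\<nu> x) (\<nu> (- y))" using assms(1) unfolding valuation_def by (metis diff_conv_add_uminus)
      then have "\<beta> \<le> \<nu> (x - y)" by (rule order_trans[OF m])
      then show "x - y \<in> {y. \<nu> y \<ge> \<beta>}" by simp
      qed
      ultimately show ?thesis by blast
    qed
    then show "add_subgroup_gen ?S \<subseteq> {y. \<nu> y \<ge> \<beta>}" unfolding add_subgroup_gen_def by (rule Inter_lower)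
  qed
qed

end
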